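(* Let $r$ be an integer. For every choice of $\gamma_{2i}\in\mathbb{K}$, $i=0,1,2,\dots$, there is a unique choice of $\gamma_{2i+1}\in\mathbb{K}$, $i=0,1,2,\dots$, such that $\varphi(x)=\sum_{i\ge0}\gamma_ix^i\in\mathcal{F}_r$.
   Context: $\mathbb{K}\in\{\mathbb{Q},\mathbb{R},\mathbb{C}\}$. For $r\in\mathbb{Z}$, $\mathcal{F}_r$ denotes the space of $\varphi\in\mathbb{K}[[x]]$ with $\varphi(x/(x-1))=(1-x)^r\varphi(x)$. *)

theory Defs
  imports "HOL-Computational_Algebra.Formal_Power_Series"
begin

text \<open>The space F_r: formal power series phi with phi(x/(x-1)) = (1-x)^r phi(x).
  Composition is formal composition; x/(x-1) has zero constant term.\<close>
definition F_space :: "int \<Rightarrow> 'a::field fps set" where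
  "F_space r = {\<phi>. \<phi> oo (fps_X * inverse (fps_X - 1)) = ((1 - fps_X) powi r) * \<phi>}"

end

theory Submission
  imports Defs
begin

definition sS :: "'a::field fps" where "sS = fps_X * inverse (fps_X - 1)"

lemma sS_eq: "(sS::'a::field fps) = 1 - inverse (1 - fps_X)"
proof -
  have h: "(fps_X - 1) * inverse (fps_X - 1) = (1::'a fps)"
    by (simp add: inverse_mult_eq_1')
  have "inverse (1 - fps_X) = - inverse (fps_X - (1::'a fps))"
  proof (rule fps_inverse_unique)
    show "(1 - fps_X) * - inverse (fps_X - 1) = (1::'a fps)"
      using h by (simp add: algebra_simps)
  qed
  moreover have "fps_X * inverse (fps_X - 1) = 1 + inverse (fps_X - (1::'a fps))"
  proof -
    have "fps_X * inverse (fps_X - 1) = (fps_X - 1) * inverse (fps_X - 1) + inverse (fps_X - (1::'a fps))"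
      by (simp add: algebra_simps)
    then show ?thesis using h by simp
  qed
  ultimately show ?thesis unfolding sS_def by simp
qed

lemma sS0: "fps_nth (sS::'a::field fps) 0 = 0" by (simp add: sS_def)
lemma sS1: "fps_nth (sS::'a::field fps) 1 = -1" by (simp add: sS_def)

lemma Q_oo: "(1 - fps_X) oo (sS::'a::field fps) = inverse (1 - fps_X)"
  by (simp add: fps_compose_sub_distrib sS_eq)

lemma iQ_oo: "inverse (1 - fps_X) oo (sS::'a::field fps) = 1 - fps_X"
proof -
  have "inverse (1 - fps_X) oo (sS::'a fps) = inverse ((1 - fps_X) oo sS)"
    by (rule fps_inverse_compose) (simp_all add: sS0)
  also have "... = 1 - fps_X" by (simp add: Q_oo)
  finally show ?thesis .
qed

lemma sS_sS: "(sS::'a::field fps) oo sS = fps_X"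
proof -
  have "sS oo (sS::'a fps) = (1 - inverse (1 - fps_X)) oo sS" by (simp add: sS_eq)
  also have "... = fps_X" by (simp add: fps_compose_sub_distrib iQ_oo)
  finally show ?thesis .
qed

definition Pr :: "int \<Rightarrow> 'a::field fps" where "Pr r = (1 - fps_X) powi r"

lemma Pr0: "fps_nth (Pr r :: 'a::field fps) 0 = 1"
  by (simp add: Pr_def power_int_def fps_nth_power_0)

lemma Pr_oo: "(Pr r oo (sS::'a::field fps)) * Pr r = 1"
proof (cases "r \<ge> 0")
  case True
  have "(Pr r oo (sS::'a fps)) = ((1 - fps_X) oo sS) ^ nat r"
    using True by (simp add: Pr_def power_int_def fps_compose_power sS0)
  also have "... = inverse (1 - fps_X) ^ nat r" by (simp add: Q_oo)
  finally have "(Pr r oo (sS::'a fps)) * Pr r = (inverse (1 - fps_X) * (1 - fps_X)) ^ nat r"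
    using True by (simp add: Pr_def power_int_def power_mult_distrib)
  also have "... = 1" by (subst inverse_mult_eq_1) simp_all
  finally show ?thesis .
next
  case False
  have "(Pr r oo (sS::'a fps)) = (inverse (1 - fps_X) oo sS) ^ nat (-r)"
    using False by (simp add: Pr_def power_int_def fps_compose_power sS0)
  also have "... = (1 - fps_X) ^ nat (-r)" by (simp add: iQ_oo)
  finally have "(Pr r oo (sS::'a fps)) * Pr r = ((1 - fps_X) * inverse (1 - fps_X)) ^ nat (-r)"
    using False by (simp add: Pr_def power_int_def power_mult_distrib)
  also have "... = 1" by (subst inverse_mult_eq_1') simp_all
  finally show ?thesis .
qed

definition trunc :: "nat \<Rightarrow> (nat \<Rightarrow> 'a::field) \<Rightarrow> 'a fps" where
  "trunc n f = Abs_fps (\<lambda>i. if i < n then f i else 0)"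

lemma comp_trunc:
  fixes f :: "nat \<Rightarrow> 'a::field"
  assumes c0: "fps_nth c 0 = 0"
  shows "fps_nth (Abs_fps f oo c) n = fps_nth (trunc n f oo c) n + f n * (fps_nth c 1) ^ n"
proof -
  have "fps_nth (Abs_fps f oo c) n = (\<Sum>i<Suc n. f i * fps_nth (c ^ i) n)"
    by (simp add: fps_compose_nth atLeast0AtMost lessThan_Suc_atMost)
  also have "... = (\<Sum>i<n. f i * fps_nth (c ^ i) n) + f n * (fps_nth c 1) ^ n"
    by (simp add: startsby_zero_power_nth_same[OF c0])
  also have "(\<Sum>i<n. f i * fps_nth (c ^ i) n) = fps_nth (trunc n f oo c) n"
  proof -
    have "fps_nth (trunc n f oo c) n = (\<Sum>i<Suc n. (if i < n then f i else 0) * fps_nth (c ^ i) n)"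
      by (simp add: fps_compose_nth trunc_def atLeast0AtMost lessThan_Suc_atMost)
    also have "... = (\<Sum>i<n. f i * fps_nth (c ^ i) n)"
      by (simp add: sum.lessThan_Suc)
    finally show ?thesis by simp
  qed
  finally show ?thesis .
qed

lemma mult_trunc:
  fixes f :: "nat \<Rightarrow> 'a::field"
  shows "fps_nth (A * Abs_fps f) n = fps_nth (A * trunc n f) n + fps_nth A 0 * f n"
proof -
  have "fps_nth (A * Abs_fps f) n - fps_nth (A * trunc n f) n
      = (\<Sum>i=0..n. fps_nth A i * (f (n - i) - (if n - i < n then f (n - i) else 0)))"
    by (simp add: fps_mult_nth trunc_def sum_subtractf[symmetric] algebra_simps)
  also have "... = (\<Sum>i=0..n. if i = 0 then fps_nth A 0 * f n else 0)"
    by (rule sum.cong) auto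
  also have "... = fps_nth A 0 * f n" by simp
  finally show ?thesis by (simp add: algebra_simps)
qed

lemma low_coeffs:
  fixes D :: "'a::field fps"
  assumes "\<And>i. i < m \<Longrightarrow> fps_nth D i = 0"
  shows "fps_nth (D oo sS) m = (-1) ^ m * fps_nth D m"
    and "fps_nth (A * D) m = fps_nth A 0 * fps_nth D m"
proof -
  have t: "trunc m (fps_nth D) = 0"
    using assms by (simp add: trunc_def fps_eq_iff)
  show "fps_nth (D oo sS) m = (-1) ^ m * fps_nth D m"
    using comp_trunc[OF sS0, of "fps_nth D" m] t by (simp add: fps_nth_inverse mult.commute sS1[simplified])
  show "fps_nth (A * D) m = fps_nth A 0 * fps_nth D m"
    using mult_trunc[of A "fps_nth D" m] t by (simp add: fps_nth_inverse)
qed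

definition stp :: "(nat \<Rightarrow> 'a::field) \<Rightarrow> int \<Rightarrow> nat \<Rightarrow> (nat \<Rightarrow> 'a) \<Rightarrow> 'a" where
  "stp g r n f = (if even n then g (n div 2)
     else (fps_nth (trunc n f oo sS) n - fps_nth (Pr r * trunc n f) n) / 2)"

primrec Ls :: "(nat \<Rightarrow> 'a::field) \<Rightarrow> int \<Rightarrow> nat \<Rightarrow> 'a list" where
  "Ls g r 0 = []"
| "Ls g r (Suc n) = Ls g r n @ [stp g r n (\<lambda>i. Ls g r n ! i)]"

definition sq :: "(nat \<Rightarrow> 'a::field) \<Rightarrow> int \<Rightarrow> nat \<Rightarrow> 'a" where
  "sq g r n = Ls g r (Suc n) ! n"

lemma Ls_len: "length (Ls g r n) = n"
  by (induction n) auto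

lemma Ls_nth: "i < n \<Longrightarrow> Ls g r n ! i = sq g r i"
proof (induction n)
  case 0 then show ?case by simp
next
  case (Suc n)
  show ?case
  proof (cases "i < n")
    case True then show ?thesis using Suc by (simp add: nth_append Ls_len)
  next
    case False then have "i = n" using Suc by simp
    then show ?thesis by (simp add: sq_def)
  qed
qed

lemma sq_eq: "sq g r n = stp g r n (sq g r)"
proof -
  have "(\<lambda>i. if i < n then Ls g r n ! i else 0) = (\<lambda>i. if i < n then sq g r i else 0)"
    by (rule ext) (simp add: Ls_nth)
  then have "trunc n (\<lambda>i. Ls g r n ! i) = trunc n (sq g r)"
    by (simp add: trunc_def)
  then show ?thesis by (simp add: sq_def nth_append Ls_len stp_def)
qed

theorem corollary5p1:
  fixes r :: int and \<gamma>even :: "nat \<Rightarrow> 'a::field_char_0"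
  shows "\<exists>!\<gamma>odd :: nat \<Rightarrow> 'a.
           Abs_fps (\<lambda>n. if even n then \<gamma>even (n div 2) else \<gamma>odd (n div 2)) \<in> F_space r"
proof (rule ex_ex1I)
  define f where "f = sq \<gamma>even r"
  define \<phi> where "\<phi> = (Abs_fps f :: 'a fps)"
  define D where "D = (\<phi> oo sS) - Pr r * \<phi>"
  define Ps where "Ps = (Pr r oo (sS::'a fps))"
  have Dodd: "fps_nth D n = 0" if "odd n" for n
  proof -
    define T1 where "T1 = fps_nth (trunc n f oo sS) n"
    define T2 where "T2 = fps_nth (Pr r * trunc n f) n"
    have fn: "f n = (T1 - T2) / 2"
      using sq_eq[of \<gamma>even r n] that by (simp add: f_def[symmetric] stp_def T1_def T2_def)
    have a: "fps_nth (\<phi> oo sS) n = T1 - f n"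
      using comp_trunc[OF sS0, of f n] that by (simp add: \<phi>_def T1_def sS1[simplified])
    have b: "fps_nth (Pr r * \<phi>) n = T2 + f n"
      using mult_trunc[of "Pr r" f n] by (simp add: \<phi>_def T2_def Pr0)
    have "fps_nth D n = T1 - T2 - 2 * f n" using a b by (simp add: D_def)
    then show ?thesis using fn by simp
  qed
  have DD: "D oo sS = - (Ps * D)"
  proof -
    have "D oo sS = (\<phi> oo (sS oo sS)) - Ps * (\<phi> oo sS)"
      by (simp add: D_def Ps_def fps_compose_sub_distrib fps_compose_mult_distrib sS0
          fps_compose_assoc)
    also have "... = \<phi> - Ps * (\<phi> oo sS)" by (simp add: sS_sS)
    also have "... = - (Ps * D)"
      using Pr_oo[of r] by (simp add: D_def Ps_def algebra_simps) blast
    finally show ?thesis .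
  qed
  have "D = 0"
  proof (rule ccontr)
    assume "D \<noteq> 0"
    define m where "m = subdegree D"
    have nz: "fps_nth D m \<noteq> 0" using \<open>D \<noteq> 0\<close> by (simp add: m_def)
    then have ev: "even m" using Dodd by blast
    have low: "\<And>i. i < m \<Longrightarrow> fps_nth D i = 0" by (auto simp: m_def)
    have "fps_nth (D oo sS) m = fps_nth D m" using low_coeffs(1)[OF low] ev by simp
    moreover have "fps_nth (Ps * D) m = fps_nth D m"
      using low_coeffs(2)[OF low, where A=Ps] by (simp add: Ps_def Pr0)
    ultimately have "fps_nth D m = - fps_nth D m" using DD by simp
    then show False using nz by simp
  qed
  then have inF: "\<phi> \<in> F_space r"
    by (simp add: D_def F_space_def sS_def Pr_def)
  have "Abs_fps (\<lambda>n. if even n then \<gamma>even (n div 2) else f (2 * (n div 2) + 1)) = \<phi>"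
  proof -
    have "(if even n then \<gamma>even (n div 2) else f (2 * (n div 2) + 1)) = f n" for n
    proof (cases "even n")
      case True then show ?thesis using sq_eq[of \<gamma>even r n] by (simp add: f_def stp_def)
    next
      case False then have "2 * (n div 2) + 1 = n" by presburger
      then show ?thesis using False by simp
    qed
    then show ?thesis by (simp add: \<phi>_def)
  qed
  then have "Abs_fps (\<lambda>n. if even n then \<gamma>even (n div 2) else (\<lambda>k. f (2 * k + 1)) (n div 2)) \<in> F_space r"
    using inF by simp
  then show "\<exists>\<gamma>odd :: nat \<Rightarrow> 'a. Abs_fps (\<lambda>n. if even n then \<gamma>even (n div 2) else \<gamma>odd (n div 2)) \<in> F_space r"
    by (rule exI[where x="\<lambda>k. f (2 * k + 1)"])
next
  fix o1 o2 :: "nat \<Rightarrow> 'a"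
  assume h1: "Abs_fps (\<lambda>n. if even n then \<gamma>even (n div 2) else o1 (n div 2)) \<in> F_space r"
  assume h2: "Abs_fps (\<lambda>n. if even n then \<gamma>even (n div 2) else o2 (n div 2)) \<in> F_space r"
  show "o1 = o2"
  proof (rule ccontr)
    assume ne: "o1 \<noteq> o2"
    define \<phi>1 where "\<phi>1 = Abs_fps (\<lambda>n. if even n then \<gamma>even (n div 2) else o1 (n div 2))"
    define \<phi>2 where "\<phi>2 = Abs_fps (\<lambda>n. if even n then \<gamma>even (n div 2) else o2 (n div 2))"
    define d where "d = \<phi>1 - \<phi>2"
    have e1: "\<phi>1 oo sS = Pr r * \<phi>1" using h1 by (simp add: \<phi>1_def F_space_def sS_def Pr_def)
    have e2: "\<phi>2 oo sS = Pr r * \<phi>2" using h2 by (simp add: \<phi>2_def F_space_def sS_def Pr_def)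
    have dd: "d oo sS = Pr r * d"
      using e1 e2 by (simp add: d_def fps_compose_sub_distrib algebra_simps)
    obtain k where "o1 k \<noteq> o2 k" using ne by blast
    then have "fps_nth d (2 * k + 1) \<noteq> 0" by (simp add: d_def \<phi>1_def \<phi>2_def)
    then have "d \<noteq> 0" by auto
    define m where "m = subdegree d"
    have nz: "fps_nth d m \<noteq> 0" using \<open>d \<noteq> 0\<close> by (simp add: m_def)
    then have od: "odd m" by (auto simp: d_def \<phi>1_def \<phi>2_def)
    have low: "\<And>i. i < m \<Longrightarrow> fps_nth d i = 0" by (auto simp: m_def)
    have "fps_nth (d oo sS) m = - fps_nth d m" using low_coeffs(1)[OF low] od by simp
    moreover have "fps_nth (Pr r * d) m = fps_nth d m"
      using low_coeffs(2)[OF low, where A="Pr r"] by (simp add: Pr0)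
    ultimately have "fps_nth d m = - fps_nth d m" using dd by simp
    then show False using nz by simp
  qed
qed

end
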